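(* (1) Let $n\in\mathbb N$ and let $T:\mathbb R_{n+1}[z]\to\mathbb R[z]$ be linear and preserve hyperbolicity. If $f\in\mathbb R[z]$ is strictly hyperbolic of degree $n$ or $n+1$ with $T(f)=0$, then $T(g)$ is hyperbolic or zero for every $g\in\mathbb R[z]$ with $\deg g\le n+1$. (2) Let $T:\mathbb C_n[z]\to\mathbb C[z]$ be a linear stability preserver. If $f\in\mathbb C[z]$ is strictly stable of degree $n$ with $T(f)=0$, then $T(g)$ is stable or zero for every $g\in\mathbb C[z]$ with $\deg g\le n$.
   Context: A real univariate polynomial is hyperbolic if it is non-zero with only real zeros; strictly hyperbolic if moreover its zeros are simple. A univariate complex polynomial $f$ is stable if $f\neq0$ and $f(z)\neq0$ whenever $\Im z>0$; strictly stable if $f(z)\neq0$ whenever $\Im z\ge0$. $T$ preserves hyperbolicity (resp. stability) if it maps hyperbolic (resp. stable) polynomials in its domain to hyperbolic (resp. stable) polynomials or $0$. *)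

theory Defs
  imports "HOL-Computational_Algebra.Polynomial" Complex_Main
begin

definition hyperbolic :: "real poly \<Rightarrow> bool" where
  "hyperbolic p \<longleftrightarrow> p \<noteq> 0 \<and>
     (\<forall>z::complex. poly (map_poly complex_of_real p) z = 0 \<longrightarrow> Im z = 0)"

definition strictly_hyperbolic :: "real poly \<Rightarrow> bool" where
  "strictly_hyperbolic p \<longleftrightarrow> hyperbolic p \<and>
     (\<forall>z::complex. poly (map_poly complex_of_real p) z = 0 \<longrightarrow>
        order z (map_poly complex_of_real p) = 1)"

definition stable :: "complex poly \<Rightarrow> bool" where
  "stable f \<longleftrightarrow> f \<noteq> 0 \<and> (\<forall>z. Im z > 0 \<longrightarrow> poly f z \<noteq> 0)"

definition strictly_stable :: "complex poly \<Rightarrow> bool" where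
  "strictly_stable f \<longleftrightarrow> f \<noteq> 0 \<and> (\<forall>z. Im z \<ge> 0 \<longrightarrow> poly f z \<noteq> 0)"

definition linear_on_deg :: "nat \<Rightarrow> ('a::comm_ring_1 poly \<Rightarrow> 'a poly) \<Rightarrow> bool" where
  "linear_on_deg m T \<longleftrightarrow>
     (\<forall>p q a b. degree p \<le> m \<longrightarrow> degree q \<le> m \<longrightarrow>
        T (smult a p + smult b q) = smult a (T p) + smult b (T q))"

definition preserves_hyperbolicity :: "nat \<Rightarrow> (real poly \<Rightarrow> real poly) \<Rightarrow> bool" where
  "preserves_hyperbolicity m T \<longleftrightarrow>
     (\<forall>p. degree p \<le> m \<longrightarrow> hyperbolic p \<longrightarrow> hyperbolic (T p) \<or> T p = 0)"

definition preserves_stability :: "nat \<Rightarrow> (complex poly \<Rightarrow> complex poly) \<Rightarrow> bool" where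
  "preserves_stability m T \<longleftrightarrow>
     (\<forall>p. degree p \<le> m \<longrightarrow> stable p \<longrightarrow> stable (T p) \<or> T p = 0)"

end

theory Submission
  imports Defs "HOL-Computational_Algebra.Fundamental_Theorem_Algebra"
begin


lemma cp_poly: "poly (map_poly complex_of_real p) (complex_of_real x) = complex_of_real (poly p x)"
  by (simp add: poly_altdef degree_map_poly coeff_map_poly of_real_sum of_real_mult of_real_power)

lemma cp_mult: "map_poly complex_of_real (p * q) = map_poly complex_of_real p * map_poly complex_of_real q"
  by (intro poly_eqI) (simp add: coeff_map_poly coeff_mult of_real_sum)

lemma cp_pderiv: "pderiv (map_poly complex_of_real p) = map_poly complex_of_real (pderiv p)"
  by (intro poly_eqI) (simp add: coeff_map_poly coeff_pderiv)

lemma cp_smult: "map_poly complex_of_real (smult c p) = smult (complex_of_real c) (map_poly complex_of_real p)"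
  by (intro map_poly_smult) auto

lemma cp_eq0: "map_poly complex_of_real p = 0 \<longleftrightarrow> p = 0"
  by (intro map_poly_eq_0_iff) auto

lemma size_card_mset: "(\<forall>x. count M x \<le> 1) \<Longrightarrow> size M = card (set_mset M)"
proof -
  assume a: "\<forall>x. count M x \<le> 1"
  have "M = mset_set (set_mset M)"
    by (rule multiset_eqI) (metis a count_eq_zero_iff count_mset_set(1) count_mset_set(3) finite_set_mset le_antisym less_one not_le)
  then show ?thesis by (metis size_mset_set)
qed

lemma hyp_smult: "c \<noteq> 0 \<Longrightarrow> hyperbolic (smult c q) \<Longrightarrow> hyperbolic q"
  by (auto simp: hyperbolic_def cp_smult)

lemma stable_smult: "c \<noteq> 0 \<Longrightarrow> stable (smult c q) \<Longrightarrow> stable q"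
  by (auto simp: stable_def)


lemma hyp_deg1: assumes "p \<noteq> 0" "degree p \<le> 1" shows "hyperbolic p"
proof -
  have p: "p = [:coeff p 0, coeff p 1:]"
    using assms(2) by (intro poly_eqI) (auto simp: coeff_pCons split: nat.splits intro!: coeff_eq_0)
  show ?thesis unfolding hyperbolic_def
  proof (intro conjI allI impI)
    fix z :: complex assume z: "poly (map_poly complex_of_real p) z = 0"
    have "map_poly complex_of_real p = [:of_real (coeff p 0), of_real (coeff p 1):]"
      by (subst p) (simp add: map_poly_pCons)
    with z have e: "of_real (coeff p 0) + of_real (coeff p 1) * z = 0" by (simp add: mult.commute)
    show "Im z = 0"
    proof (cases "coeff p 1 = 0")
      case True
      with e have "coeff p 0 = 0" by simp
      with True p assms(1) show ?thesis by simp
    next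
      case False
      from e have "Im (of_real (coeff p 0) + of_real (coeff p 1) * z) = 0" by simp
      then have "coeff p 1 * Im z = 0" by simp
      with False show ?thesis by simp
    qed
  qed (rule assms(1))
qed

lemma hyp_roots:
  "finite R \<Longrightarrow> p \<noteq> 0 \<Longrightarrow> (\<forall>r\<in>R. poly p r = 0) \<Longrightarrow> degree p \<le> card R + 1 \<Longrightarrow> hyperbolic p"
proof (induction R arbitrary: p rule: finite_induct)
  case empty
  then show ?case using hyp_deg1 by simp
next
  case (insert r R p)
  have "poly p r = 0" using insert by simp
  then obtain q where pq: "p = [:-r,1:] * q" by (metis dvdE poly_eq_0_iff_dvd)
  have q0: "q \<noteq> 0" using insert(4) pq by auto
  have dq: "degree p = degree q + 1" proof -
    have "degree ([:-r,1:] * q) = degree [:-r,1:] + degree q" using q0 by (intro degree_mult_eq) auto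
    then show ?thesis using pq by simp
  qed
  have "\<forall>s\<in>R. poly q s = 0"
  proof
    fix s assume "s \<in> R"
    then have "poly p s = 0" "s \<noteq> r" using insert by auto
    then show "poly q s = 0" using pq by simp
  qed
  moreover have "degree q \<le> card R + 1" using dq insert by simp
  ultimately have hq: "hyperbolic q" using insert q0 by blast
  show ?case unfolding hyperbolic_def
  proof (intro conjI allI impI)
    fix z :: complex assume "poly (map_poly complex_of_real p) z = 0"
    moreover have "map_poly complex_of_real p = map_poly complex_of_real [:-r,1:] * map_poly complex_of_real q"
      by (simp only: pq cp_mult)
    moreover have "map_poly complex_of_real [:-r,1:] = [:- of_real r, 1:]"
      by (simp add: map_poly_pCons)
    ultimately have "(z - of_real r) * poly (map_poly complex_of_real q) z = 0"
      by auto
    then show "Im z = 0" using hq unfolding hyperbolic_def by auto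
  qed (rule insert(4))
qed

lemma card_roots_sh:
  assumes "strictly_hyperbolic f"
  shows "card {r. poly f r = 0} = degree f"
proof -
  let ?F = "map_poly complex_of_real f"
  have f0: "f \<noteq> 0" using assms by (simp add: strictly_hyperbolic_def hyperbolic_def)
  then have F0: "?F \<noteq> 0" by (simp add: cp_eq0)
  have ords: "\<forall>z. count (proots ?F) z \<le> 1"
  proof
    fix z
    show "count (proots ?F) z \<le> 1"
    proof (cases "poly ?F z = 0")
      case True then show ?thesis using assms F0 by (simp add: strictly_hyperbolic_def)
    next
      case False then show ?thesis using F0 by (simp add: order_root)
    qed
  qed
  have set: "{z. poly ?F z = 0} = complex_of_real ` {r. poly f r = 0}"
  proof
    show "{z. poly ?F z = 0} \<subseteq> complex_of_real ` {r. poly f r = 0}"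
    proof
      fix z assume z: "z \<in> {z. poly ?F z = 0}"
      then have "Im z = 0" using assms by (simp add: strictly_hyperbolic_def hyperbolic_def)
      then have zr: "z = of_real (Re z)" by (simp add: complex_eq_iff)
      with z have "of_real (poly f (Re z)) = (0::complex)" by (metis cp_poly mem_Collect_eq)
      then show "z \<in> complex_of_real ` {r. poly f r = 0}" using zr by auto
    qed
  qed (auto simp: cp_poly)
  have "degree f = degree ?F" by (simp add: degree_map_poly)
  also have "\<dots> = size (proots ?F)" by (simp add: size_proots_complex)
  also have "\<dots> = card {z. poly ?F z = 0}" using size_card_mset[OF ords] F0 by simp
  also have "\<dots> = card {r. poly f r = 0}" unfolding set
    by (rule card_image) (auto simp: inj_on_def)
  finally show ?thesis by simp
qed

lemma deriv_sh:
  assumes "strictly_hyperbolic f" "poly f r = 0"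
  shows "poly (pderiv f) r \<noteq> 0"
proof -
  let ?F = "map_poly complex_of_real f"
  have f0: "f \<noteq> 0" using assms by (simp add: strictly_hyperbolic_def hyperbolic_def)
  then have F0: "?F \<noteq> 0" by (simp add: cp_eq0)
  have "rsquarefree ?F" unfolding rsquarefree_def
    using F0 assms(1) by (auto simp: strictly_hyperbolic_def order_root)
  then have "\<not> (poly ?F (of_real r) = 0 \<and> poly (pderiv ?F) (of_real r) = 0)"
    by (simp add: rsquarefree_roots)
  then show ?thesis using assms(2) by (simp add: cp_poly cp_pderiv)
qed

lemma sign_change:
  fixes f :: "real poly"
  assumes "poly f r = 0" "poly (pderiv f) r \<noteq> 0"
  shows "\<exists>d>0. \<forall>h. 0 < h \<and> h < d \<longrightarrow> poly f (r - h) * poly f (r + h) < 0"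
proof -
  have D: "DERIV (\<lambda>x. poly f x) r :> poly (pderiv f) r" by simp
  show ?thesis
  proof (cases "poly (pderiv f) r > 0")
    case True
    obtain d1 where d1: "d1 > 0" "\<forall>h>0. h < d1 \<longrightarrow> poly f r < poly f (r + h)"
      using DERIV_pos_inc_right[OF D True] by blast
    obtain d2 where d2: "d2 > 0" "\<forall>h>0. h < d2 \<longrightarrow> poly f (r - h) < poly f r"
      using DERIV_pos_inc_left[OF D True] by blast
    show ?thesis using d1 d2 assms(1)
      by (intro exI[of _ "min d1 d2"]) (auto intro: mult_neg_pos)
  next
    case False
    then have N: "poly (pderiv f) r < 0" using assms(2) by simp
    obtain d1 where d1: "d1 > 0" "\<forall>h>0. h < d1 \<longrightarrow> poly f r > poly f (r + h)"
      using DERIV_neg_dec_right[OF D N] by blast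
    obtain d2 where d2: "d2 > 0" "\<forall>h>0. h < d2 \<longrightarrow> poly f r < poly f (r - h)"
      using DERIV_neg_dec_left[OF D N] by blast
    show ?thesis using d1 d2 assms(1)
      by (intro exI[of _ "min d1 d2"]) (auto intro: mult_pos_neg)
  qed
qed

lemma ev_less: "(c::real) > 0 \<Longrightarrow> eventually (\<lambda>x. x < c) (at_right 0)"
  by (auto simp: eventually_at_right_field)

lemma ev_ex: "eventually P (at_right (0::real)) \<Longrightarrow> \<exists>x>0. P x"
  unfolding eventually_at_right_field by (metis field_lbound_gt_zero less_trans zero_less_one)


lemma part1:
  fixes T :: "real poly \<Rightarrow> real poly" and f g :: "real poly"
  assumes lin: "linear_on_deg (n + 1) T" and pres: "preserves_hyperbolicity (n + 1) T"
    and sh: "strictly_hyperbolic f" and df: "degree f = n \<or> degree f = n + 1" and Tf: "T f = 0"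
    and dg: "degree g \<le> n + 1"
  shows "hyperbolic (T g) \<or> T g = 0"
proof -
  define R where "R = {r. poly f r = 0}"
  have f0: "f \<noteq> 0" using sh by (simp add: strictly_hyperbolic_def hyperbolic_def)
  have finR: "finite R" unfolding R_def using f0 by (rule poly_roots_finite)
  have cardR: "card R = degree f" unfolding R_def using sh by (rule card_roots_sh)
  have "\<forall>r\<in>R. \<exists>d>0. \<forall>h. 0 < h \<and> h < d \<longrightarrow> poly f (r - h) * poly f (r + h) < 0"
    using sign_change deriv_sh[OF sh] unfolding R_def by blast
  then obtain d0 where d0: "\<And>r. r \<in> R \<Longrightarrow> d0 r > 0 \<and> (\<forall>h. 0 < h \<and> h < d0 r \<longrightarrow> poly f (r - h) * poly f (r + h) < 0)"
    by metis
  have "eventually (\<lambda>x. \<forall>r\<in>R. x < d0 r) (at_right 0)"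
    using finR d0 by (intro eventually_ball_finite) (auto intro: ev_less)
  moreover have "eventually (\<lambda>x. \<forall>r\<in>R. \<forall>r'\<in>R. r \<noteq> r' \<longrightarrow> x < \<bar>r - r'\<bar> / 2) (at_right 0)"
  proof (intro eventually_ball_finite ballI finR)
    fix r r' assume "r \<in> R" "r' \<in> R"
    show "eventually (\<lambda>x. r \<noteq> r' \<longrightarrow> x < \<bar>r - r'\<bar> / 2) (at_right 0)"
    proof (cases "r = r'")
      case False
      then have "\<bar>r - r'\<bar> / 2 > 0" by simp
      from ev_less[OF this] show ?thesis by (rule eventually_mono) simp
    qed simp
  qed
  ultimately have "eventually (\<lambda>x. (\<forall>r\<in>R. x < d0 r) \<and> (\<forall>r\<in>R. \<forall>r'\<in>R. r \<noteq> r' \<longrightarrow> x < \<bar>r - r'\<bar> / 2)) (at_right 0)"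
    by (rule eventually_conj)
  then obtain \<delta> where \<delta>: "\<delta> > 0" "\<And>r. r \<in> R \<Longrightarrow> \<delta> < d0 r"
    "\<And>r r'. r \<in> R \<Longrightarrow> r' \<in> R \<Longrightarrow> r \<noteq> r' \<Longrightarrow> \<delta> < \<bar>r - r'\<bar> / 2"
    using ev_ex by blast
  have neg: "poly f (r - \<delta>) * poly f (r + \<delta>) < 0" if "r \<in> R" for r
    using d0[OF that] \<delta>(1) \<delta>(2)[OF that] by blast
  have "eventually (\<lambda>e. \<forall>r\<in>R. (poly f (r - \<delta>) + e * poly g (r - \<delta>)) * (poly f (r + \<delta>) + e * poly g (r + \<delta>)) < 0) (at_right 0)"
  proof (intro eventually_ball_finite ballI finR)
    fix r assume r: "r \<in> R"
    have "((\<lambda>e. (poly f (r - \<delta>) + e * poly g (r - \<delta>)) * (poly f (r + \<delta>) + e * poly g (r + \<delta>)))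
       \<longlongrightarrow> (poly f (r - \<delta>) + 0 * poly g (r - \<delta>)) * (poly f (r + \<delta>) + 0 * poly g (r + \<delta>))) (at_right 0)"
      by (intro tendsto_intros)
    then show "eventually (\<lambda>e. (poly f (r - \<delta>) + e * poly g (r - \<delta>)) * (poly f (r + \<delta>) + e * poly g (r + \<delta>)) < 0) (at_right 0)"
      using neg[OF r] by (intro order_tendstoD(2)) auto
  qed
  then obtain \<epsilon> :: real where \<epsilon>: "\<epsilon> > 0"
    "\<And>r. r \<in> R \<Longrightarrow> (poly f (r - \<delta>) + \<epsilon> * poly g (r - \<delta>)) * (poly f (r + \<delta>) + \<epsilon> * poly g (r + \<delta>)) < 0"
    using ev_ex by blast
  define p where "p = f + smult \<epsilon> g"
  have "\<forall>r\<in>R. \<exists>s. r - \<delta> < s \<and> s < r + \<delta> \<and> poly p s = 0"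
  proof
    fix r assume r: "r \<in> R"
    have "poly p (r - \<delta>) * poly p (r + \<delta>) < 0" using \<epsilon>(2)[OF r] by (simp add: p_def)
    then show "\<exists>s. r - \<delta> < s \<and> s < r + \<delta> \<and> poly p s = 0"
      using poly_IVT[of "r - \<delta>" "r + \<delta>" p] \<delta>(1) by auto
  qed
  then obtain s where s: "\<And>r. r \<in> R \<Longrightarrow> r - \<delta> < s r \<and> s r < r + \<delta> \<and> poly p (s r) = 0"
    by metis
  have inj: "inj_on s R"
  proof (rule inj_onI, rule ccontr)
    fix r r' assume rr: "r \<in> R" "r' \<in> R" "s r = s r'" "r \<noteq> r'"
    have "\<bar>r - r'\<bar> < 2 * \<delta>" using s[OF rr(1)] s[OF rr(2)] rr(3) by auto
    with \<delta>(3)[OF rr(1,2,4)] show False by simp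
  qed
  have Tp: "T p = smult \<epsilon> (T g)"
  proof -
    have "degree f \<le> n + 1" using df by auto
    then have "T (smult 1 f + smult \<epsilon> g) = smult 1 (T f) + smult \<epsilon> (T g)"
      using lin dg unfolding linear_on_deg_def by blast
    then show ?thesis using Tf by (simp add: p_def)
  qed
  show ?thesis
  proof (cases "p = 0")
    case True
    have "T (smult 0 0 + smult 0 0) = smult 0 (T 0) + smult 0 (T 0)"
      using lin unfolding linear_on_deg_def by (metis degree_0 le0)
    then have "T 0 = 0" by simp
    with Tp True \<epsilon>(1) show ?thesis by simp
  next
    case False
    have degp: "degree p \<le> n + 1" unfolding p_def
    proof (rule degree_add_le)
      show "degree f \<le> n + 1" using df by auto
      show "degree (smult \<epsilon> g) \<le> n + 1" using dg degree_smult_le order.trans by blast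
    qed
    have "hyperbolic p"
    proof (rule hyp_roots[of "s ` R"])
      show "finite (s ` R)" using finR by simp
      show "\<forall>r\<in>s ` R. poly p r = 0" using s by auto
      show "degree p \<le> card (s ` R) + 1" using card_image[OF inj] cardR degp df by auto
    qed (rule False)
    then have "hyperbolic (T p) \<or> T p = 0" using pres degp by (simp add: preserves_hyperbolicity_def)
    then show ?thesis unfolding Tp using \<epsilon>(1) hyp_smult[of \<epsilon> "T g"] by auto
  qed
qed


lemma factor_bound:
  fixes a :: complex assumes "Im a < 0"
  shows "\<exists>k>0. \<forall>z. Im z \<ge> 0 \<longrightarrow> k * (1 + cmod z) \<le> cmod (z - a)"
proof -
  define h where "h = - Im a"
  have h: "h > 0" using assms by (simp add: h_def)
  define k where "k = h / (1 + cmod a + h)"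
  have pos: "1 + cmod a + h > 0" using h by (simp add: add_pos_nonneg)
  have "\<forall>z. Im z \<ge> 0 \<longrightarrow> k * (1 + cmod z) \<le> cmod (z - a)"
  proof (intro allI impI)
    fix z :: complex assume z: "Im z \<ge> 0"
    have m1: "h \<le> cmod (z - a)"
    proof -
      have "h \<le> Im (z - a)" using z by (simp add: h_def)
      also have "\<dots> \<le> cmod (z - a)" using abs_Im_le_cmod by (rule order_trans[OF abs_ge_self])
      finally show ?thesis .
    qed
    have m2: "cmod z - cmod a \<le> cmod (z - a)" by (rule norm_triangle_ineq2)
    have "h * (1 + cmod z) = (1 + cmod a) * h + h * (cmod z - cmod a)" by (simp add: algebra_simps)
    also have "\<dots> \<le> (1 + cmod a) * cmod (z - a) + h * cmod (z - a)"
      by (intro add_mono mult_left_mono m1 m2) (use h in auto)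
    also have "\<dots> = (1 + cmod a + h) * cmod (z - a)" by (simp add: algebra_simps)
    finally have "h * (1 + cmod z) \<le> (1 + cmod a + h) * cmod (z - a)" .
    then show "k * (1 + cmod z) \<le> cmod (z - a)" using pos
      by (simp add: k_def field_simps)
  qed
  moreover have "k > 0" using h pos by (simp add: k_def)
  ultimately show ?thesis by blast
qed

lemma prod_bound:
  fixes rt :: "nat \<Rightarrow> complex"
  shows "(\<forall>i<m. Im (rt i) < 0) \<Longrightarrow> \<exists>k>0. \<forall>z. Im z \<ge> 0 \<longrightarrow> k * (1 + cmod z) ^ m \<le> cmod (\<Prod>i<m. z - rt i)"
proof (induction m)
  case 0 then show ?case by (intro exI[of _ 1]) simp
next
  case (Suc m)
  obtain k1 where k1: "k1 > 0" "\<forall>z. Im z \<ge> 0 \<longrightarrow> k1 * (1 + cmod z) ^ m \<le> cmod (\<Prod>i<m. z - rt i)"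
    using Suc by auto
  obtain k2 where k2: "k2 > 0" "\<forall>z. Im z \<ge> 0 \<longrightarrow> k2 * (1 + cmod z) \<le> cmod (z - rt m)"
    using factor_bound[of "rt m"] Suc.prems by auto
  have "\<forall>z. Im z \<ge> 0 \<longrightarrow> (k1 * k2) * (1 + cmod z) ^ Suc m \<le> cmod (\<Prod>i<Suc m. z - rt i)"
  proof (intro allI impI)
    fix z :: complex assume z: "Im z \<ge> 0"
    have "(k1 * k2) * (1 + cmod z) ^ Suc m = (k1 * (1 + cmod z) ^ m) * (k2 * (1 + cmod z))"
      by (simp add: algebra_simps)
    also have "\<dots> \<le> cmod (\<Prod>i<m. z - rt i) * cmod (z - rt m)"
      using k1 k2 z by (intro mult_mono) auto
    also have "\<dots> = cmod (\<Prod>i<Suc m. z - rt i)" by (simp add: norm_mult)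
    finally show "(k1 * k2) * (1 + cmod z) ^ Suc m \<le> cmod (\<Prod>i<Suc m. z - rt i)" .
  qed
  then show ?case using k1 k2 by (intro exI[of _ "k1 * k2"]) auto
qed

lemma g_bound:
  fixes g :: "complex poly" assumes "degree g \<le> n"
  shows "cmod (poly g z) \<le> (\<Sum>i\<le>degree g. cmod (coeff g i)) * (1 + cmod z) ^ n"
proof -
  have "cmod (poly g z) \<le> (\<Sum>i\<le>degree g. cmod (coeff g i * z ^ i))"
    unfolding poly_altdef by (rule norm_sum)
  also have "\<dots> \<le> (\<Sum>i\<le>degree g. cmod (coeff g i) * (1 + cmod z) ^ n)"
  proof (intro sum_mono)
    fix i assume i: "i \<in> {..degree g}"
    have "cmod z ^ i \<le> (1 + cmod z) ^ i" by (intro power_mono) auto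
    also have "\<dots> \<le> (1 + cmod z) ^ n" using i assms by (intro power_increasing) auto
    finally show "cmod (coeff g i * z ^ i) \<le> cmod (coeff g i) * (1 + cmod z) ^ n"
      by (simp add: norm_mult norm_power mult_left_mono)
  qed
  also have "\<dots> = (\<Sum>i\<le>degree g. cmod (coeff g i)) * (1 + cmod z) ^ n"
    by (simp add: sum_distrib_right)
  finally show ?thesis .
qed


lemma part2:
  fixes T :: "complex poly \<Rightarrow> complex poly" and f g :: "complex poly"
  assumes lin: "linear_on_deg n T" and pres: "preserves_stability n T"
    and ss: "strictly_stable f" and df: "degree f = n" and Tf: "T f = 0"
    and dg: "degree g \<le> n"
  shows "stable (T g) \<or> T g = 0"
proof -
  have f0: "f \<noteq> 0" using ss by (simp add: strictly_stable_def)
  obtain rt where rt: "smult (lead_coeff f) (\<Prod>i<degree f. [:-rt i, 1:]) = f"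
    using complex_poly_decompose' by blast
  have pf: "poly f z = lead_coeff f * (\<Prod>i<n. z - rt i)" for z
  proof -
    have "poly f z = poly (smult (lead_coeff f) (\<Prod>i<degree f. [:-rt i, 1:])) z" using rt by simp
    then show ?thesis by (simp add: poly_prod df)
  qed
  have "\<forall>i<n. Im (rt i) < 0"
  proof (intro allI impI)
    fix i assume i: "i < n"
    have "poly f (rt i) = 0" unfolding pf using i by (auto intro!: prod_zero)
    then show "Im (rt i) < 0" using ss unfolding strictly_stable_def by (meson not_le)
  qed
  then obtain k where k: "k > 0" "\<forall>z. Im z \<ge> 0 \<longrightarrow> k * (1 + cmod z) ^ n \<le> cmod (\<Prod>i<n. z - rt i)"
    using prod_bound by blast
  define L where "L = cmod (lead_coeff f)"
  have L: "L > 0" using f0 by (simp add: L_def)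
  define C where "C = (\<Sum>i\<le>degree g. cmod (coeff g i))"
  have C: "C \<ge> 0" unfolding C_def by (auto intro: sum_nonneg)
  define M where "M = C / (L * k) + 1"
  have M: "M > 0" using C L k by (simp add: M_def add_nonneg_pos)
  have gb: "cmod (poly g z) \<le> M * cmod (poly f z)" if z: "Im z \<ge> 0" for z
  proof -
    have "cmod (poly g z) \<le> C * (1 + cmod z) ^ n" unfolding C_def by (rule g_bound[OF dg])
    also have "\<dots> = (C / (L * k)) * (L * (k * (1 + cmod z) ^ n))" using L k by simp
    also have "\<dots> \<le> (C / (L * k)) * (L * cmod (\<Prod>i<n. z - rt i))"
      using k z L C by (intro mult_left_mono) auto
    also have "\<dots> = (C / (L * k)) * cmod (poly f z)" by (simp add: pf L_def norm_mult)
    also have "\<dots> \<le> M * cmod (poly f z)" unfolding M_def by (intro mult_right_mono) auto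
    finally show ?thesis .
  qed
  define e where "e = 1 / (2 * M)"
  have e: "e > 0" using M by (simp add: e_def)
  define p where "p = f + smult (complex_of_real e) g"
  have nz: "poly p z \<noteq> 0" if z: "Im z \<ge> 0" for z
  proof -
    have fz: "cmod (poly f z) > 0" using ss z by (simp add: strictly_stable_def)
    have "cmod (complex_of_real e * poly g z) = e * cmod (poly g z)" using e by (simp add: norm_mult)
    also have "\<dots> \<le> e * (M * cmod (poly f z))" using gb[OF z] e by (intro mult_left_mono) auto
    also have "\<dots> = cmod (poly f z) / 2" using M by (simp add: e_def)
    finally have a: "cmod (complex_of_real e * poly g z) \<le> cmod (poly f z) / 2" .
    have "cmod (poly f z) - cmod (complex_of_real e * poly g z) \<le> cmod (poly f z + complex_of_real e * poly g z)"
      by (metis add_diff_cancel_right' norm_diff_ineq)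
    then have "cmod (poly f z + complex_of_real e * poly g z) > 0" using a fz by linarith
    then show ?thesis by (simp add: p_def)
  qed
  have Tp: "T p = smult (complex_of_real e) (T g)"
  proof -
    have "T (smult 1 f + smult (complex_of_real e) g) = smult 1 (T f) + smult (complex_of_real e) (T g)"
      using lin dg df unfolding linear_on_deg_def by blast
    then show ?thesis using Tf by (simp add: p_def)
  qed
  have degp: "degree p \<le> n" unfolding p_def
  proof (rule degree_add_le)
    show "degree f \<le> n" using df by auto
    show "degree (smult (complex_of_real e) g) \<le> n" using dg degree_smult_le order.trans by blast
  qed
  have "p \<noteq> 0" using nz[of "\<i>"] by auto
  then have "stable p" using nz unfolding stable_def by auto
  then have "stable (T p) \<or> T p = 0" using pres degp by (simp add: preserves_stability_def)
  then show ?thesis unfolding Tp using e stable_smult[of "complex_of_real e" "T g"] by auto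
qed



theorem mainTheorem12:
  shows "(\<forall>(n::nat) (T::real poly \<Rightarrow> real poly) (f::real poly).
            linear_on_deg (n + 1) T \<and> preserves_hyperbolicity (n + 1) T \<and>
            strictly_hyperbolic f \<and> (degree f = n \<or> degree f = n + 1) \<and> T f = 0
            \<longrightarrow> (\<forall>g. degree g \<le> n + 1 \<longrightarrow> hyperbolic (T g) \<or> T g = 0))
       \<and> (\<forall>(n::nat) (T::complex poly \<Rightarrow> complex poly) (f::complex poly).
            linear_on_deg n T \<and> preserves_stability n T \<and>
            strictly_stable f \<and> degree f = n \<and> T f = 0
            \<longrightarrow> (\<forall>g. degree g \<le> n \<longrightarrow> stable (T g) \<or> T g = 0))"
  using part1 part2 by blast

end
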